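(* Let $U\colon[0,1]^2\to[0,1]$ be a uninorm with neutral element $e\in(0,1)$ such that $U\in\mathcal U$ and $U\in\mathcal N_{\min}$ (respectively $U\in\mathcal N_{\max}$). If $U$ has no idempotent points in $(e,1)$ (respectively in $(0,e)$), then $U$ is irreducible with respect to the ordinal sum construction.
   Context: A uninorm is a commutative, associative binary operation on $[0,1]$, non-decreasing in each variable, with a neutral element; "broad sense" allows neutral element $e\in[0,1]$ (t-norm if $e=1$, t-conorm if $e=0$), and a proper uninorm has $e\in(0,1)$. Conjunctive: $U(1,0)=0$; disjunctive: $U(1,0)=1$. Underlying t-norm $T_U(x,y)=U(ex,ey)/e$, underlying t-conorm $C_U(x,y)=(U(e+(1-e)x,e+(1-e)y)-e)/(1-e)$. $\mathcal U$: uninorms with continuous $T_U$ and $C_U$. $\mathcal N$: uninorms $V$ with $V(x,0)=0$ for all $x\in[0,1)$ and $V(x,1)=1$ for all $x\in(0,1]$. $\mathcal U_{\min}$ ($\mathcal U_{\max}$): uninorms $U_1$ with neutral element $e_1$ such that $U_1(x,y)=\min(x,y)$ (resp. $\max(x,y)$) for all $(x,y)\in[0,1]^2\setminus([0,e_1]^2\cup[e_1,1]^2)$. $\mathcal N_{\min}$ ($\mathcal N_{\max}$): uninorms $U\in\mathcal N$ for which there is $U_1\in\mathcal U_{\min}$ ($U_1\in\mathcal U_{\max}$) with $U=U_1$ on $(0,1)^2$. An idempotent point of $U$ is $x$ with $U(x,x)=x$. Ordinal sum construction: transformation: for a uninorm $W$ with neutral $e'$, $0\le a\le b<c\le d\le1$,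 $v\in[b,c]$: $f(x)=a+(b-a)x/e'$ on $[0,e')$, $f(e')=v$, $f(x)=d-(1-x)(d-c)/(1-e')$ on $(e',1]$; $W^{a,b,c,d}_v(x,y)=f(W(f^{-1}(x),f^{-1}(y)))$ on $([a,b)\cup\{v\}\cup(c,d])^2$ (if $a=b$, resp. $c=d$, only the part on $[e',1]^2$, resp. $[0,e']^2$, is transported). Data: $K$ countable; $((a_k,b_k))_k$ pairwise disjoint open (possibly empty) subintervals of $[0,e]$ with $\bigcup_k[a_k,b_k]=[0,e]$, $((c_k,d_k))_k$ likewise in $[e,1]$ with $\bigcup_k[c_k,d_k]=[e,1]$; $b_k\le a_i\iff c_k\ge d_i$ for all $i,k$; $U_k$ a proper uninorm if both intervals non-empty, a t-norm or proper uninorm if $(a_k,b_k)\ne\emptyset$, a t-conorm or proper uninorm if $(c_k,d_k)\ne\emptyset$; if both are empty there is no $k_1\ne k$ with $a_k=b_k=a_{k_1}=b_{k_1}$, $c_k=d_k=c_{k_1}=d_{k_1}$. $B=\{b_k\}\setminus\{a_k\}$, $C=\{c_k\}\setminus\{d_k\}$, $n(b_k)=b_k$ if $U_k(1,0)=0$ else $c_k$; $v_k=c_k$ (resp. $b_k$) if some $i$ has $b_k=a_i$ with $U_i$ disjunctive (resp. conjunctive), $v_k=n(b_k)$ if $b_k\in B,c_k\in C$, $v_k=b_k$ if $b_k\in B,c_k\notin C$, $v_k=c_k$ if $b_k\notin B,c_k\in C$. The ordinal sum $(\langle a_k,b_k,c_k,d_k,U_k\rangle\mid k\in K)^e$ is: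 $y$ if $x=e$; $x$ if $y=e$; $(U_k)^{a_k,b_k,c_k,d_k}_{v_k}(x,y)$ on $([a_k,b_k)\cup(c_k,d_k])^2$; $x$ if $y\in[b_k,c_k]$, $x\in[a_k,d_k]\setminus[b_k,c_k]$; $y$ symmetrically; $\min(x,y)$ if $(x,y)\in[b_k,c_k]^2\setminus((b_k,c_k)^2\cup\{(b_k,c_k),(c_k,b_k)\})$, $b_k\in B,c_k\in C$, $x+y<b_k+c_k$; $\max(x,y)$ likewise with $x+y>b_k+c_k$; $n(b_k)$ at $(b_k,c_k),(c_k,b_k)$ when $b_k\in B,c_k\in C$; $\min(x,y)$ on $\{b_k\}\times[b_k,c_k]\cup[b_k,c_k]\times\{b_k\}$ when $b_k\in B,c_k\notin C$; $\max(x,y)$ on $\{c_k\}\times[b_k,c_k]\cup[b_k,c_k]\times\{c_k\}$ when $b_k\notin B,c_k\in C$. A summand is empty if $a_k=b_k$ and $c_k=d_k$. A uninorm $U$ with neutral element $e$ is irreducible with respect to the ordinal sum construction if it can be expressed only as a trivial ordinal sum, i.e., in every representation of $U$ as such an ordinal sum the only non-empty summand is defined on $([0,e)\cup(e,1])^2$, i.e. on all of $[0,1]^2$. *)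

theory Defs
  imports "HOL-Analysis.Analysis"
begin

definition uninorm :: "(real \<Rightarrow> real \<Rightarrow> real) \<Rightarrow> real \<Rightarrow> bool" where
  "uninorm U e \<longleftrightarrow>
     e \<in> {0..1} \<and>
     (\<forall>x\<in>{0..1}. \<forall>y\<in>{0..1}. U x y \<in> {0..1}) \<and>
     (\<forall>x\<in>{0..1}. \<forall>y\<in>{0..1}. U x y = U y x) \<and>
     (\<forall>x\<in>{0..1}. \<forall>y\<in>{0..1}. \<forall>z\<in>{0..1}. U (U x y) z = U x (U y z)) \<and>
     (\<forall>x\<in>{0..1}. \<forall>y\<in>{0..1}. \<forall>z\<in>{0..1}. x \<le> y \<longrightarrow> U x z \<le> U y z) \<and>
     (\<forall>x\<in>{0..1}. U e x = x)"

definition proper_uninorm :: "(real \<Rightarrow> real \<Rightarrow> real) \<Rightarrow> real \<Rightarrow> bool" where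
  "proper_uninorm U e \<longleftrightarrow> uninorm U e \<and> 0 < e \<and> e < 1"

definition conjunctive :: "(real \<Rightarrow> real \<Rightarrow> real) \<Rightarrow> bool" where
  "conjunctive U \<longleftrightarrow> U 1 0 = 0"

definition disjunctive :: "(real \<Rightarrow> real \<Rightarrow> real) \<Rightarrow> bool" where
  "disjunctive U \<longleftrightarrow> U 1 0 = 1"

definition underlying_tnorm :: "(real \<Rightarrow> real \<Rightarrow> real) \<Rightarrow> real \<Rightarrow> real \<Rightarrow> real \<Rightarrow> real" where
  "underlying_tnorm U e x y = U (e * x) (e * y) / e"

definition underlying_tconorm :: "(real \<Rightarrow> real \<Rightarrow> real) \<Rightarrow> real \<Rightarrow> real \<Rightarrow> real \<Rightarrow> real" where
  "underlying_tconorm U e x y = (U (e + (1 - e) * x) (e + (1 - e) * y) - e) / (1 - e)"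

definition in_class_U :: "(real \<Rightarrow> real \<Rightarrow> real) \<Rightarrow> real \<Rightarrow> bool" where
  "in_class_U U e \<longleftrightarrow> uninorm U e \<and>
     continuous_on ({0..1} \<times> {0..1}) (\<lambda>(x, y). underlying_tnorm U e x y) \<and>
     continuous_on ({0..1} \<times> {0..1}) (\<lambda>(x, y). underlying_tconorm U e x y)"

definition in_class_N :: "(real \<Rightarrow> real \<Rightarrow> real) \<Rightarrow> bool" where
  "in_class_N V \<longleftrightarrow> (\<exists>e. uninorm V e) \<and>
     (\<forall>x. 0 \<le> x \<and> x < 1 \<longrightarrow> V x 0 = 0) \<and>
     (\<forall>x. 0 < x \<and> x \<le> 1 \<longrightarrow> V x 1 = 1)"

definition in_class_Umin :: "(real \<Rightarrow> real \<Rightarrow> real) \<Rightarrow> bool" where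
  "in_class_Umin U1 \<longleftrightarrow> (\<exists>e1. uninorm U1 e1 \<and>
     (\<forall>x\<in>{0..1}. \<forall>y\<in>{0..1}.
        \<not> (x \<le> e1 \<and> y \<le> e1) \<and> \<not> (e1 \<le> x \<and> e1 \<le> y) \<longrightarrow> U1 x y = min x y))"

definition in_class_Umax :: "(real \<Rightarrow> real \<Rightarrow> real) \<Rightarrow> bool" where
  "in_class_Umax U1 \<longleftrightarrow> (\<exists>e1. uninorm U1 e1 \<and>
     (\<forall>x\<in>{0..1}. \<forall>y\<in>{0..1}.
        \<not> (x \<le> e1 \<and> y \<le> e1) \<and> \<not> (e1 \<le> x \<and> e1 \<le> y) \<longrightarrow> U1 x y = max x y))"

definition in_class_Nmin :: "(real \<Rightarrow> real \<Rightarrow> real) \<Rightarrow> bool" where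
  "in_class_Nmin U \<longleftrightarrow> in_class_N U \<and>
     (\<exists>U1. in_class_Umin U1 \<and> (\<forall>x\<in>{0<..<1}. \<forall>y\<in>{0<..<1}. U x y = U1 x y))"

definition in_class_Nmax :: "(real \<Rightarrow> real \<Rightarrow> real) \<Rightarrow> bool" where
  "in_class_Nmax U \<longleftrightarrow> in_class_N U \<and>
     (\<exists>U1. in_class_Umax U1 \<and> (\<forall>x\<in>{0<..<1}. \<forall>y\<in>{0<..<1}. U x y = U1 x y))"

definition idempotent_point :: "(real \<Rightarrow> real \<Rightarrow> real) \<Rightarrow> real \<Rightarrow> bool" where
  "idempotent_point U x \<longleftrightarrow> U x x = x"

definition tr_f :: "real \<Rightarrow> real \<Rightarrow> real \<Rightarrow> real \<Rightarrow> real \<Rightarrow> real \<Rightarrow> real \<Rightarrow> real" where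
  "tr_f e' a b c d v z =
     (if z < e' then a + (b - a) * z / e'
      else if z = e' then v
      else d - (1 - z) * (d - c) / (1 - e'))"

definition tr_finv :: "real \<Rightarrow> real \<Rightarrow> real \<Rightarrow> real \<Rightarrow> real \<Rightarrow> real \<Rightarrow> real \<Rightarrow> real" where
  "tr_finv e' a b c d v x =
     (if a \<le> x \<and> x < b then e' * (x - a) / (b - a)
      else if x = v then e'
      else 1 - (d - x) * (1 - e') / (d - c))"

definition transform ::
  "(real \<Rightarrow> real \<Rightarrow> real) \<Rightarrow> real \<Rightarrow> real \<Rightarrow> real \<Rightarrow> real \<Rightarrow> real \<Rightarrow> real \<Rightarrow> real \<Rightarrow> real \<Rightarrow> real" where
  "transform W e' a b c d v x y =
     tr_f e' a b c d v (W (tr_finv e' a b c d v x) (tr_finv e' a b c d v y))"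

text \<open>The countable
  index set \<open>K\<close> is represented as a set of natural numbers; \<open>Uk k\<close> is the
  \<open>k\<close>-th summand, a uninorm in the broad sense with neutral element \<open>ek k\<close>.\<close>

definition ordsum_data ::
  "real \<Rightarrow> nat set \<Rightarrow> (nat \<Rightarrow> real) \<Rightarrow> (nat \<Rightarrow> real) \<Rightarrow> (nat \<Rightarrow> real) \<Rightarrow> (nat \<Rightarrow> real)
   \<Rightarrow> (nat \<Rightarrow> real \<Rightarrow> real \<Rightarrow> real) \<Rightarrow> (nat \<Rightarrow> real) \<Rightarrow> bool" where
  "ordsum_data e K a b c d Uk ek \<longleftrightarrow>
     (\<forall>k\<in>K. 0 \<le> a k \<and> a k \<le> b k \<and> b k \<le> e \<and> e \<le> c k \<and> c k \<le> d k \<and> d k \<le> 1) \<and>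
     (\<forall>i\<in>K. \<forall>k\<in>K. i \<noteq> k \<longrightarrow> {a i<..<b i} \<inter> {a k<..<b k} = {}) \<and>
     (\<forall>i\<in>K. \<forall>k\<in>K. i \<noteq> k \<longrightarrow> {c i<..<d i} \<inter> {c k<..<d k} = {}) \<and>
     (\<Union>k\<in>K. {a k..b k}) = {0..e} \<and>
     (\<Union>k\<in>K. {c k..d k}) = {e..1} \<and>
     (\<forall>i\<in>K. \<forall>k\<in>K. b k \<le> a i \<longleftrightarrow> d i \<le> c k) \<and>
     (\<forall>k\<in>K. uninorm (Uk k) (ek k)) \<and>
     (\<forall>k\<in>K. a k < b k \<and> c k < d k \<longrightarrow> proper_uninorm (Uk k) (ek k)) \<and>
     (\<forall>k\<in>K. a k < b k \<longrightarrow> ek k = 1 \<or> proper_uninorm (Uk k) (ek k)) \<and>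
     (\<forall>k\<in>K. c k < d k \<longrightarrow> ek k = 0 \<or> proper_uninorm (Uk k) (ek k)) \<and>
     (\<forall>k\<in>K. a k = b k \<and> c k = d k \<longrightarrow>
        \<not> (\<exists>k1\<in>K. k1 \<noteq> k \<and> a k1 = b k1 \<and> a k1 = a k \<and> c k1 = d k1 \<and> c k1 = c k))"

definition os_B :: "nat set \<Rightarrow> (nat \<Rightarrow> real) \<Rightarrow> (nat \<Rightarrow> real) \<Rightarrow> real set" where
  "os_B K a b = b ` K - a ` K"

definition os_C :: "nat set \<Rightarrow> (nat \<Rightarrow> real) \<Rightarrow> (nat \<Rightarrow> real) \<Rightarrow> real set" where
  "os_C K c d = c ` K - d ` K"

definition os_n :: "(nat \<Rightarrow> real) \<Rightarrow> (nat \<Rightarrow> real) \<Rightarrow> (nat \<Rightarrow> real \<Rightarrow> real \<Rightarrow> real) \<Rightarrow> nat \<Rightarrow> real" where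
  "os_n b c Uk k = (if Uk k 1 0 = 0 then b k else c k)"

definition os_v ::
  "nat set \<Rightarrow> (nat \<Rightarrow> real) \<Rightarrow> (nat \<Rightarrow> real) \<Rightarrow> (nat \<Rightarrow> real) \<Rightarrow> (nat \<Rightarrow> real)
   \<Rightarrow> (nat \<Rightarrow> real \<Rightarrow> real \<Rightarrow> real) \<Rightarrow> nat \<Rightarrow> real" where
  "os_v K a b c d Uk k =
     (if \<exists>i\<in>K. b k = a i \<and> disjunctive (Uk i) then c k
      else if \<exists>i\<in>K. b k = a i \<and> conjunctive (Uk i) then b k
      else if b k \<in> os_B K a b \<and> c k \<in> os_C K c d then os_n b c Uk k
      else if b k \<in> os_B K a b \<and> c k \<notin> os_C K c d then b k
      else c k)"

definition is_ordinal_sum ::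
  "(real \<Rightarrow> real \<Rightarrow> real) \<Rightarrow> real \<Rightarrow> nat set \<Rightarrow> (nat \<Rightarrow> real) \<Rightarrow> (nat \<Rightarrow> real) \<Rightarrow> (nat \<Rightarrow> real)
   \<Rightarrow> (nat \<Rightarrow> real) \<Rightarrow> (nat \<Rightarrow> real \<Rightarrow> real \<Rightarrow> real) \<Rightarrow> (nat \<Rightarrow> real) \<Rightarrow> bool" where
  "is_ordinal_sum U e K a b c d Uk ek \<longleftrightarrow>
     (let B = os_B K a b; C = os_C K c d in
     (\<forall>y\<in>{0..1}. U e y = y) \<and>
     (\<forall>x\<in>{0..1}. U x e = x) \<and>
     (\<forall>k\<in>K. \<forall>x\<in>{a k..<b k} \<union> {c k<..d k}. \<forall>y\<in>{a k..<b k} \<union> {c k<..d k}.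
        U x y = transform (Uk k) (ek k) (a k) (b k) (c k) (d k) (os_v K a b c d Uk k) x y) \<and>
     (\<forall>k\<in>K. \<forall>x\<in>{a k..d k} - {b k..c k}. \<forall>y\<in>{b k..c k}. U x y = x \<and> U y x = x) \<and>
     (\<forall>k\<in>K. b k \<in> B \<and> c k \<in> C \<longrightarrow>
        (\<forall>x\<in>{b k..c k}. \<forall>y\<in>{b k..c k}.
           (x, y) \<notin> {b k<..<c k} \<times> {b k<..<c k} \<and> (x, y) \<noteq> (b k, c k) \<and> (x, y) \<noteq> (c k, b k) \<longrightarrow>
           (x + y < b k + c k \<longrightarrow> U x y = min x y) \<and>
           (x + y > b k + c k \<longrightarrow> U x y = max x y))) \<and>
     (\<forall>k\<in>K. b k \<in> B \<and> c k \<in> C \<longrightarrow>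
        U (b k) (c k) = os_n b c Uk k \<and> U (c k) (b k) = os_n b c Uk k) \<and>
     (\<forall>k\<in>K. b k \<in> B \<and> c k \<notin> C \<longrightarrow>
        (\<forall>y\<in>{b k..c k}. U (b k) y = min (b k) y \<and> U y (b k) = min y (b k))) \<and>
     (\<forall>k\<in>K. b k \<notin> B \<and> c k \<in> C \<longrightarrow>
        (\<forall>y\<in>{b k..c k}. U (c k) y = max (c k) y \<and> U y (c k) = max y (c k))))"

text \<open>Irreducibility: in every representation of \<open>U\<close> as an ordinal sum, every non-empty
  summand is defined on all of \<open>[0,1]\<^sup>2\<close>, i.e. has \<open>a_k = 0, b_k = c_k = e, d_k = 1\<close>.\<close>

definition irreducible_os :: "(real \<Rightarrow> real \<Rightarrow> real) \<Rightarrow> real \<Rightarrow> bool" where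
  "irreducible_os U e \<longleftrightarrow>
     (\<forall>K a b c d Uk ek. ordsum_data e K a b c d Uk ek \<and> is_ordinal_sum U e K a b c d Uk ek \<longrightarrow>
        (\<forall>k\<in>K. \<not> (a k = b k \<and> c k = d k) \<longrightarrow> a k = 0 \<and> b k = e \<and> c k = e \<and> d k = 1))"

end

theory Submission imports Defs begin
lemma disj_iv:
  fixes p q r s :: real
  assumes "{p<..<q} \<inter> {r<..<s} = {}" "p < q" "r < s"
  shows "q \<le> r \<or> s \<le> p"
proof (rule ccontr)
  assume "\<not> ?thesis"
  then have "(max p r + min q s)/2 \<in> {p<..<q} \<inter> {r<..<s}" using assms(2,3) by auto
  then show False using assms(1) by blast
qed

lemma no_cover:
  fixes S :: "real set"
  assumes "countable S" "p < q" "{p<..<q} \<subseteq> S"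
  shows False
  using assms uncountable_open_interval[of p q] countable_subset by blast

lemma cnt_img: "countable (f ` (K::nat set))"
  by (rule countable_image) simp

lemma neutral_unique:
  assumes U: "uninorm U e" and e: "0 < e" "e < 1" and U1: "uninorm U1 e1"
    and eq: "\<forall>x\<in>{0<..<1}. \<forall>y\<in>{0<..<1}. U x y = U1 x y"
  shows "e1 = e"
proof -
  have e1: "0 \<le> e1" "e1 \<le> 1" using U1 unfolding uninorm_def by auto
  have Un: "\<And>x. x \<in> {0..1} \<Longrightarrow> U e x = x" using U unfolding uninorm_def by auto
  have U1n: "\<And>x. x \<in> {0..1} \<Longrightarrow> U1 e1 x = x" using U1 unfolding uninorm_def by auto
  have U1c: "\<And>x y. x \<in> {0..1} \<Longrightarrow> y \<in> {0..1} \<Longrightarrow> U1 x y = U1 y x" using U1 unfolding uninorm_def by auto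
  have U1m: "\<And>x y z. x \<in> {0..1} \<Longrightarrow> y \<in> {0..1} \<Longrightarrow> z \<in> {0..1} \<Longrightarrow> x \<le> y \<Longrightarrow> U1 x z \<le> U1 y z"
    using U1 unfolding uninorm_def by blast
  consider "0 < e1 \<and> e1 < 1" | "e1 = 0" | "e1 = 1" using e1 by linarith
  then show ?thesis
  proof cases
    case 1
    have "U e e1 = e1" using Un e1 by auto
    moreover have "U e e1 = U1 e e1" using eq 1 e by auto
    moreover have "U1 e e1 = e" using U1c[of e e1] U1n[of e] e e1 by auto
    ultimately show ?thesis by simp
  next
    case 2
    have "U1 0 e \<le> U1 (e/2) e" using U1m[of 0 "e/2" e] e by auto
    moreover have "U1 0 e = e" using U1n[of e] 2 e by auto
    moreover have "U1 (e/2) e = U1 e (e/2)" using U1c[of "e/2" e] e by auto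
    moreover have "U1 e (e/2) = U e (e/2)" using eq e by auto
    moreover have "U e (e/2) = e/2" using Un[of "e/2"] e by auto
    ultimately show ?thesis using e by linarith
  next
    case 3
    have "U1 ((1+e)/2) e \<le> U1 1 e" using U1m[of "(1+e)/2" 1 e] e by auto
    moreover have "U1 1 e = e" using U1n[of e] 3 e by auto
    moreover have "U1 ((1+e)/2) e = U1 e ((1+e)/2)" using U1c[of "(1+e)/2" e] e by auto
    moreover have "U1 e ((1+e)/2) = U e ((1+e)/2)" using eq e by auto
    moreover have "U e ((1+e)/2) = (1+e)/2" using Un[of "(1+e)/2"] e by auto
    ultimately have False using e by (simp add: field_simps)
    then show ?thesis ..
  qed
qed

lemma idem_up:
  assumes e: "0 < e" "e < 1"
    and cont: "continuous_on ({0..1}\<times>{0..1}) (\<lambda>(x, y). underlying_tconorm U e x y)"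
    and p: "e < p" "p < q" "q \<le> 1"
    and h: "\<And>x. p < x \<Longrightarrow> x \<le> q \<Longrightarrow> U x p = x"
  shows "U p p = p"
proof -
  define F where "F = (\<lambda>(x, y). underlying_tconorm U e x y)"
  define X where "X n = p + (q - p) * inverse (real (Suc n))" for n
  have iv: "inverse (real (Suc n)) > 0" "inverse (real (Suc n)) \<le> 1" for n by (auto simp: field_simps)
  have Xb: "p < X n" "X n \<le> q" for n
  proof -
    show "p < X n" using p iv[of n] by (simp add: X_def)
    have "(q - p) * inverse (real (Suc n)) \<le> (q - p) * 1"
      using p iv[of n] by (intro mult_left_mono) auto
    then show "X n \<le> q" by (simp add: X_def)
  qed
  have XL: "X \<longlonglongrightarrow> p"
    unfolding X_def using tendsto_add[OF tendsto_const tendsto_mult[OF tendsto_const LIMSEQ_inverse_real_of_nat]]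
    by simp
  define z where "z n = ((X n - e)/(1-e), (p - e)/(1-e))" for n
  have zL: "z \<longlonglongrightarrow> ((p - e)/(1-e), (p - e)/(1-e))"
    unfolding z_def by (intro tendsto_intros XL) (use e in auto)
  have zin: "z n \<in> {0..1}\<times>{0..1}" for n
    using Xb[of n] p e by (auto simp: z_def field_simps)
  have lin: "((p - e)/(1-e), (p - e)/(1-e)) \<in> {0..1}\<times>{0..1}"
    using p e by (auto simp: field_simps)
  have c1: "(\<lambda>n. F (z n)) \<longlonglongrightarrow> F ((p - e)/(1-e), (p - e)/(1-e))"
    using continuous_on_tendsto_compose[OF cont[folded F_def] zL lin] zin by auto
  have sub: "e + (1 - e) * ((s - e) / (1 - e)) = s" for s using e by (simp add: field_simps)
  have Fz: "F (z n) = (X n - e)/(1-e)" for n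
    using h[OF Xb(1) Xb(2)] by (simp add: F_def z_def underlying_tconorm_def sub)
  have c2: "(\<lambda>n. F (z n)) \<longlonglongrightarrow> (p - e)/(1-e)"
    unfolding Fz by (intro tendsto_intros XL) (use e in auto)
  have "F ((p - e)/(1-e), (p - e)/(1-e)) = (p - e)/(1-e)"
    using LIMSEQ_unique[OF c1 c2] .
  moreover have "F ((p - e)/(1-e), (p - e)/(1-e)) = (U p p - e)/(1-e)"
    unfolding F_def case_prod_conv underlying_tconorm_def sub by (rule refl)
  ultimately have "(U p p - e)/(1-e) = (p - e)/(1-e)" by simp
  then show ?thesis using e by (simp add: field_simps)
qed

lemma idem_down:
  assumes e: "0 < e" "e < 1"
    and cont: "continuous_on ({0..1}\<times>{0..1}) (\<lambda>(x, y). underlying_tnorm U e x y)"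
    and p: "0 \<le> q" "q < p" "p \<le> e"
    and h: "\<And>x. q \<le> x \<Longrightarrow> x < p \<Longrightarrow> U x p = x"
  shows "U p p = p"
proof -
  define F where "F = (\<lambda>(x, y). underlying_tnorm U e x y)"
  define X where "X n = p - (p - q) * inverse (real (Suc n))" for n
  have iv: "inverse (real (Suc n)) > 0" "inverse (real (Suc n)) \<le> 1" for n by (auto simp: field_simps)
  have Xb: "X n < p" "q \<le> X n" for n
  proof -
    show "X n < p" using p iv[of n] by (simp add: X_def)
    have "(p - q) * inverse (real (Suc n)) \<le> (p - q) * 1"
      using p iv[of n] by (intro mult_left_mono) auto
    then show "q \<le> X n" by (simp add: X_def)
  qed
  have XL: "X \<longlonglongrightarrow> p"
    unfolding X_def using tendsto_diff[OF tendsto_const tendsto_mult[OF tendsto_const LIMSEQ_inverse_real_of_nat]]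
    by simp
  define z where "z n = (X n / e, p / e)" for n
  have zL: "z \<longlonglongrightarrow> (p / e, p / e)"
    unfolding z_def by (intro tendsto_intros XL) (use e in auto)
  have zin: "z n \<in> {0..1}\<times>{0..1}" for n
    using Xb[of n] p e by (auto simp: z_def field_simps)
  have lin: "(p / e, p / e) \<in> {0..1}\<times>{0..1}"
    using p e by (auto simp: field_simps)
  have c1: "(\<lambda>n. F (z n)) \<longlonglongrightarrow> F (p / e, p / e)"
    using continuous_on_tendsto_compose[OF cont[folded F_def] zL lin] zin by auto
  have sub: "e * (s / e) = s" for s using e by (simp add: field_simps)
  have Fz: "F (z n) = X n / e" for n
    using h[OF Xb(2) Xb(1)] by (simp add: F_def z_def underlying_tnorm_def sub)
  have c2: "(\<lambda>n. F (z n)) \<longlonglongrightarrow> p / e"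
    unfolding Fz by (intro tendsto_intros XL) (use e in auto)
  have "F (p / e, p / e) = p / e"
    using LIMSEQ_unique[OF c1 c2] .
  moreover have "F (p / e, p / e) = U p p / e"
    unfolding F_def case_prod_conv underlying_tnorm_def sub by (rule refl)
  ultimately have "U p p / e = p / e" by simp
  then show ?thesis using e by (simp add: field_simps)
qed

lemma core_min:
  fixes U :: "real \<Rightarrow> real \<Rightarrow> real" and K :: "nat set"
  assumes e: "0 < e" "e < 1"
    and bnd: "\<forall>k\<in>K. 0 \<le> a k \<and> a k \<le> b k \<and> b k \<le> e \<and> e \<le> c k \<and> c k \<le> d k \<and> d k \<le> 1"
    and dA: "\<forall>i\<in>K. \<forall>k\<in>K. i \<noteq> k \<longrightarrow> {a i<..<b i} \<inter> {a k<..<b k} = {}"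
    and dC: "\<forall>i\<in>K. \<forall>k\<in>K. i \<noteq> k \<longrightarrow> {c i<..<d i} \<inter> {c k<..<d k} = {}"
    and covA: "(\<Union>k\<in>K. {a k..b k}) = {0..e}"
    and covC: "(\<Union>k\<in>K. {c k..d k}) = {e..1}"
    and nest: "\<forall>i\<in>K. \<forall>k\<in>K. b k \<le> a i \<longleftrightarrow> d i \<le> c k"
    and R4: "\<forall>k\<in>K. \<forall>x\<in>{a k..d k} - {b k..c k}. \<forall>y\<in>{b k..c k}. U x y = x \<and> U y x = x"
    and Fmin: "\<And>x y. 0 < x \<Longrightarrow> x < e \<Longrightarrow> e < y \<Longrightarrow> y < 1 \<Longrightarrow> U y x = x"
    and Fone: "\<And>x. 0 < x \<Longrightarrow> x \<le> 1 \<Longrightarrow> U x 1 = 1"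
    and Fid: "\<And>p q. e < p \<Longrightarrow> p < q \<Longrightarrow> q \<le> 1 \<Longrightarrow> (\<And>x. p < x \<Longrightarrow> x \<le> q \<Longrightarrow> U x p = x) \<Longrightarrow> False"
    and k: "k \<in> K" "\<not> (a k = b k \<and> c k = d k)"
  shows "a k = 0 \<and> b k = e \<and> c k = e \<and> d k = 1"
proof -
  have A: "b i = e \<and> c i = e" if i: "i \<in> K" "c i < d i" for i
  proof -
    from bnd i have bi: "0 \<le> a i" "a i \<le> b i" "b i \<le> e" "e \<le> c i" "c i \<le> d i" "d i \<le> 1" by auto
    define x where "x = (c i + d i)/2"
    have x: "c i < x" "x < d i" "x \<le> d i" "a i \<le> x" "e < x" "x < 1" using bi i(2) e by (auto simp: x_def)
    have "b i = e"
    proof (rule ccontr)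
      assume "b i \<noteq> e" hence "b i < e" using bi by auto
      define y where "y = (b i + e)/2"
      have y: "0 < y" "y < e" "b i \<le> y" "y \<le> c i" using bi e \<open>b i < e\<close> by (auto simp: y_def)
      have "U x y = x" using R4 i(1) x y by auto
      moreover have "U x y = y" using Fmin y x by auto
      ultimately show False using x y by auto
    qed
    moreover have "c i = e"
    proof (rule ccontr)
      assume "c i \<noteq> e" hence "e < c i" using bi by auto
      show False
      proof (rule Fid[of "c i" "d i"])
        show "e < c i" "c i < d i" "d i \<le> 1" using \<open>e < c i\<close> i bi by auto
        fix z assume "c i < z" "z \<le> d i" then show "U z (c i) = z" using R4 i(1) bi by auto
      qed
    qed
    ultimately show ?thesis ..
  qed
  have B: "c i < 1" if i: "i \<in> K" "a i < b i" for i
  proof (rule ccontr)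
    from bnd i have bi: "0 \<le> a i" "a i \<le> b i" "b i \<le> e" "e \<le> c i" "c i \<le> d i" "d i \<le> 1" by auto
    assume "\<not> c i < 1" then have ci: "c i = 1" using bi by auto
    define x where "x = (a i + b i)/2"
    have x: "0 < x" "x < e" "a i \<le> x" "x < b i" "x \<le> d i" using bi i(2) e by (auto simp: x_def)
    have "U x 1 = x" using R4 i(1) x ci bi e by auto
    moreover have "U x 1 = 1" using Fone x e by auto
    ultimately show False using x e by auto
  qed
  obtain j where j: "j \<in> K" "c j < d j"
  proof (rule ccontr)
    assume nj: "\<not> thesis"
    have "{e<..<1} \<subseteq> c ` K"
    proof
      fix s assume s: "s \<in> {e<..<1}"
      then have "s \<in> (\<Union>k\<in>K. {c k..d k})" using covC by auto
      then obtain i where "i \<in> K" "s \<in> {c i..d i}" by auto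
      moreover have "\<not> c i < d i" using nj that \<open>i \<in> K\<close> by blast
      ultimately show "s \<in> c ` K" using bnd by force
    qed
    then show False using no_cover[OF cnt_img] e by blast
  qed
  have bj: "b j = e" "c j = e" using A j by auto
  have D: "i = j" if i: "i \<in> K" "c i < d i" for i
  proof (rule ccontr)
    assume "i \<noteq> j"
    then have "{c i<..<d i} \<inter> {c j<..<d j} = {}" using dC i j by auto
    then have "d i \<le> c j \<or> d j \<le> c i" using disj_iv i j by blast
    then show False using A[OF i] bj i j by auto
  qed
  have dj: "d j = 1"
  proof (rule ccontr)
    assume "d j \<noteq> 1" then have "d j < 1" using bnd j by force
    have "{d j<..<1} \<subseteq> c ` K"
    proof
      fix s assume s: "s \<in> {d j<..<1}"
      then have "s \<in> (\<Union>k\<in>K. {c k..d k})" using covC bnd j by force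
      then obtain i where i: "i \<in> K" "s \<in> {c i..d i}" by auto
      have "\<not> c i < d i"
      proof
        assume "c i < d i" then have "i = j" using D i by auto
        then show False using i s by auto
      qed
      then show "s \<in> c ` K" using i bnd by force
    qed
    then show False using no_cover[OF cnt_img] \<open>d j < 1\<close> by blast
  qed
  have F: "i = j" if i: "i \<in> K" "a i < b i" for i
  proof (rule ccontr)
    assume ij: "i \<noteq> j"
    have "\<not> (b i \<le> a j)" using nest i(1) j(1) B[OF i] dj by auto
    then have abi: "a j < b i" by auto
    from bnd i have bi: "0 \<le> a i" "a i \<le> b i" "b i \<le> e" by auto
    show False
    proof (cases "a j < b j")
      case True
      then have "{a i<..<b i} \<inter> {a j<..<b j} = {}" using dA i j ij by auto
      then have "b i \<le> a j \<or> b j \<le> a i" using disj_iv i True by blast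
      then show False using abi bj bi i by auto
    next
      case False
      then have "a j = e" using bnd j bj by force
      then show False using abi bi by auto
    qed
  qed
  have aj: "a j = 0"
  proof (rule ccontr)
    assume "a j \<noteq> 0" then have "0 < a j" using bnd j by force
    have "{0<..<a j} \<subseteq> a ` K"
    proof
      fix s assume s: "s \<in> {0<..<a j}"
      then have "s \<in> (\<Union>k\<in>K. {a k..b k})" using covA bnd j bj by force
      then obtain i where i: "i \<in> K" "s \<in> {a i..b i}" by auto
      have "\<not> a i < b i"
      proof
        assume "a i < b i" then have "i = j" using F i by auto
        then show False using i s by auto
      qed
      then show "s \<in> a ` K" using i bnd by force
    qed
    then show False using no_cover[OF cnt_img] \<open>0 < a j\<close> by blast
  qed
  have "k = j"
  proof (cases "c k < d k")
    case True then show ?thesis using D k by auto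
  next
    case False
    then have "a k < b k" using k bnd by force
    then show ?thesis using F k by auto
  qed
  then show ?thesis using aj bj dj by auto
qed

lemma core_max:
  fixes U :: "real \<Rightarrow> real \<Rightarrow> real" and K :: "nat set"
  assumes e: "0 < e" "e < 1"
    and bnd: "\<forall>k\<in>K. 0 \<le> a k \<and> a k \<le> b k \<and> b k \<le> e \<and> e \<le> c k \<and> c k \<le> d k \<and> d k \<le> 1"
    and dA: "\<forall>i\<in>K. \<forall>k\<in>K. i \<noteq> k \<longrightarrow> {a i<..<b i} \<inter> {a k<..<b k} = {}"
    and dC: "\<forall>i\<in>K. \<forall>k\<in>K. i \<noteq> k \<longrightarrow> {c i<..<d i} \<inter> {c k<..<d k} = {}"
    and covA: "(\<Union>k\<in>K. {a k..b k}) = {0..e}"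
    and covC: "(\<Union>k\<in>K. {c k..d k}) = {e..1}"
    and nest: "\<forall>i\<in>K. \<forall>k\<in>K. b k \<le> a i \<longleftrightarrow> d i \<le> c k"
    and R4: "\<forall>k\<in>K. \<forall>x\<in>{a k..d k} - {b k..c k}. \<forall>y\<in>{b k..c k}. U x y = x \<and> U y x = x"
    and Fmax: "\<And>x y. 0 < x \<Longrightarrow> x < e \<Longrightarrow> e < y \<Longrightarrow> y < 1 \<Longrightarrow> U x y = y"
    and Fzero: "\<And>x. 0 \<le> x \<Longrightarrow> x < 1 \<Longrightarrow> U x 0 = 0"
    and Fid: "\<And>p q. 0 \<le> q \<Longrightarrow> q < p \<Longrightarrow> p < e \<Longrightarrow> (\<And>x. q \<le> x \<Longrightarrow> x < p \<Longrightarrow> U x p = x) \<Longrightarrow> False"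
    and k: "k \<in> K" "\<not> (a k = b k \<and> c k = d k)"
  shows "a k = 0 \<and> b k = e \<and> c k = e \<and> d k = 1"
proof -
  have A: "b i = e \<and> c i = e" if i: "i \<in> K" "a i < b i" for i
  proof -
    from bnd i have bi: "0 \<le> a i" "a i \<le> b i" "b i \<le> e" "e \<le> c i" "c i \<le> d i" "d i \<le> 1" by auto
    define x where "x = (a i + b i)/2"
    have x: "a i < x" "x < b i" "a i \<le> x" "x \<le> d i" "0 < x" "x < e" using bi i(2) e by (auto simp: x_def)
    have "c i = e"
    proof (rule ccontr)
      assume "c i \<noteq> e" hence "e < c i" using bi by auto
      define y where "y = (c i + e)/2"
      have y: "e < y" "y < 1" "b i \<le> y" "y \<le> c i" using bi e \<open>e < c i\<close> by (auto simp: y_def)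
      have "U x y = x" using R4 i(1) x y by auto
      moreover have "U x y = y" using Fmax y x by auto
      ultimately show False using x y by auto
    qed
    moreover have "b i = e"
    proof (rule ccontr)
      assume "b i \<noteq> e" hence "b i < e" using bi by auto
      show False
      proof (rule Fid[of "a i" "b i"])
        show "0 \<le> a i" "a i < b i" "b i < e" using \<open>b i < e\<close> i bi by auto
        fix z assume "a i \<le> z" "z < b i" then show "U z (b i) = z" using R4 i(1) bi by auto
      qed
    qed
    ultimately show ?thesis by simp
  qed
  have B: "0 < b i" if i: "i \<in> K" "c i < d i" for i
  proof (rule ccontr)
    from bnd i have bi: "0 \<le> a i" "a i \<le> b i" "b i \<le> e" "e \<le> c i" "c i \<le> d i" "d i \<le> 1" by auto
    assume "\<not> 0 < b i" then have ci: "b i = 0" "a i = 0" using bi by auto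
    define x where "x = (c i + d i)/2"
    have x: "e < x" "x < 1" "c i < x" "x \<le> d i" using bi i(2) e by (auto simp: x_def)
    have "U x 0 = x" using R4 i(1) x ci bi e by auto
    moreover have "U x 0 = 0" using Fzero x e by auto
    ultimately show False using x e by auto
  qed
  obtain j where j: "j \<in> K" "a j < b j"
  proof (rule ccontr)
    assume nj: "\<not> thesis"
    have "{0<..<e} \<subseteq> a ` K"
    proof
      fix s assume s: "s \<in> {0<..<e}"
      then have "s \<in> (\<Union>k\<in>K. {a k..b k})" using covA by auto
      then obtain i where "i \<in> K" "s \<in> {a i..b i}" by auto
      moreover have "\<not> a i < b i" using nj that \<open>i \<in> K\<close> by blast
      ultimately show "s \<in> a ` K" using bnd by force
    qed
    then show False using no_cover[OF cnt_img] e by blast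
  qed
  have bj: "b j = e" "c j = e" using A j by auto
  have D: "i = j" if i: "i \<in> K" "a i < b i" for i
  proof (rule ccontr)
    assume "i \<noteq> j"
    then have "{a i<..<b i} \<inter> {a j<..<b j} = {}" using dA i j by auto
    then have "b i \<le> a j \<or> b j \<le> a i" using disj_iv i j by blast
    then show False using A[OF i] bj i j by auto
  qed
  have aj: "a j = 0"
  proof (rule ccontr)
    assume "a j \<noteq> 0" then have "0 < a j" using bnd j by force
    have "{0<..<a j} \<subseteq> a ` K"
    proof
      fix s assume s: "s \<in> {0<..<a j}"
      then have "s \<in> (\<Union>k\<in>K. {a k..b k})" using covA bnd j bj by force
      then obtain i where i: "i \<in> K" "s \<in> {a i..b i}" by auto
      have "\<not> a i < b i"
      proof
        assume "a i < b i" then have "i = j" using D i by auto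
        then show False using i s by auto
      qed
      then show "s \<in> a ` K" using i bnd by force
    qed
    then show False using no_cover[OF cnt_img] \<open>0 < a j\<close> by blast
  qed
  have F: "i = j" if i: "i \<in> K" "c i < d i" for i
  proof (rule ccontr)
    assume ij: "i \<noteq> j"
    have "(b i \<le> a j) = (d j \<le> c i)" using nest i(1) j(1) by blast
    then have "\<not> (d j \<le> c i)" using B[OF i] aj by auto
    then have cdi: "c i < d j" by auto
    from bnd i have bi: "e \<le> c i" "c i \<le> d i" "d i \<le> 1" by auto
    show False
    proof (cases "c j < d j")
      case True
      then have "{c i<..<d i} \<inter> {c j<..<d j} = {}" using dC i j ij by auto
      then have "d i \<le> c j \<or> d j \<le> c i" using disj_iv i True by blast
      then show False using cdi bj bi i by auto
    next
      case False
      then have "d j = e" using bnd j bj by force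
      then show False using cdi bi by auto
    qed
  qed
  have dj: "d j = 1"
  proof (rule ccontr)
    assume "d j \<noteq> 1" then have "d j < 1" using bnd j by force
    have "{d j<..<1} \<subseteq> c ` K"
    proof
      fix s assume s: "s \<in> {d j<..<1}"
      then have "s \<in> (\<Union>k\<in>K. {c k..d k})" using covC bnd j by force
      then obtain i where i: "i \<in> K" "s \<in> {c i..d i}" by auto
      have "\<not> c i < d i"
      proof
        assume "c i < d i" then have "i = j" using F i by auto
        then show False using i s by auto
      qed
      then show "s \<in> c ` K" using i bnd by force
    qed
    then show False using no_cover[OF cnt_img] \<open>d j < 1\<close> by blast
  qed
  have "k = j"
  proof (cases "a k < b k")
    case True then show ?thesis using D k by auto
  next
    case False
    then have "c k < d k" using k bnd by force
    then show ?thesis using F k by auto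
  qed
  then show ?thesis using aj bj dj by auto
qed

theorem proposition9:
  fixes U :: "real \<Rightarrow> real \<Rightarrow> real" and e :: real
  assumes "uninorm U e" and "0 < e" and "e < 1"
    and "in_class_U U e"
    and "(in_class_Nmin U \<and> (\<forall>x. e < x \<and> x < 1 \<longrightarrow> \<not> idempotent_point U x)) \<or>
         (in_class_Nmax U \<and> (\<forall>x. 0 < x \<and> x < e \<longrightarrow> \<not> idempotent_point U x))"
  shows "irreducible_os U e"
  unfolding irreducible_os_def
proof (intro allI impI ballI)
  fix K a b c d Uk ek k
  assume H: "ordsum_data e K a b c d Uk ek \<and> is_ordinal_sum U e K a b c d Uk ek"
    and k: "k \<in> K" "\<not> (a k = b k \<and> c k = d k)"
  have e: "0 < e" "e < 1" using assms(2,3) .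
  note OD = conjunct1[OF H, unfolded ordsum_data_def]
  note bnd = OD[THEN conjunct1]
  note dA = OD[THEN conjunct2, THEN conjunct1]
  note dC = OD[THEN conjunct2, THEN conjunct2, THEN conjunct1]
  note covA = OD[THEN conjunct2, THEN conjunct2, THEN conjunct2, THEN conjunct1]
  note covC = OD[THEN conjunct2, THEN conjunct2, THEN conjunct2, THEN conjunct2, THEN conjunct1]
  note nest = OD[THEN conjunct2, THEN conjunct2, THEN conjunct2, THEN conjunct2, THEN conjunct2, THEN conjunct1]
  have R4: "\<forall>k\<in>K. \<forall>x\<in>{a k..d k} - {b k..c k}. \<forall>y\<in>{b k..c k}. U x y = x \<and> U y x = x"
    using conjunct2[OF H] unfolding is_ordinal_sum_def Let_def by (elim conjE) assumption
  have cT: "continuous_on ({0..1}\<times>{0..1}) (\<lambda>(x, y). underlying_tnorm U e x y)"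
    and cC: "continuous_on ({0..1}\<times>{0..1}) (\<lambda>(x, y). underlying_tconorm U e x y)"
    using assms(4) unfolding in_class_U_def by blast+
  from assms(5) show "a k = 0 \<and> b k = e \<and> c k = e \<and> d k = 1"
  proof
    assume A: "in_class_Nmin U \<and> (\<forall>x. e < x \<and> x < 1 \<longrightarrow> \<not> idempotent_point U x)"
    then have N: "in_class_N U" and ni: "\<forall>x. e < x \<and> x < 1 \<longrightarrow> \<not> idempotent_point U x"
      unfolding in_class_Nmin_def by auto
    from A obtain U1 e1 where U1: "uninorm U1 e1"
      and mn: "\<forall>x\<in>{0..1}. \<forall>y\<in>{0..1}. \<not> (x \<le> e1 \<and> y \<le> e1) \<and> \<not> (e1 \<le> x \<and> e1 \<le> y) \<longrightarrow> U1 x y = min x y"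
      and eq: "\<forall>x\<in>{0<..<1}. \<forall>y\<in>{0<..<1}. U x y = U1 x y"
      unfolding in_class_Nmin_def in_class_Umin_def by blast
    have e1: "e1 = e" using neutral_unique[OF assms(1) e U1 eq] .
    have Fmin: "U y x = x" if "0 < x" "x < e" "e < y" "y < 1" for x y
    proof -
      have "U y x = U1 y x" using eq that e by auto
      also have "\<dots> = min y x" using mn that e e1 by auto
      finally show ?thesis using that by auto
    qed
    have Fone: "U x 1 = 1" if "0 < x" "x \<le> 1" for x
      using N that unfolding in_class_N_def by blast
    have Fid: "\<And>p q. e < p \<Longrightarrow> p < q \<Longrightarrow> q \<le> 1 \<Longrightarrow> (\<And>x. p < x \<Longrightarrow> x \<le> q \<Longrightarrow> U x p = x) \<Longrightarrow> False"
    proof -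
      fix p q assume that: "e < p" "p < q" "q \<le> 1" "\<And>x. p < x \<Longrightarrow> x \<le> q \<Longrightarrow> U x p = x"
      have "U p p = p" using idem_up[OF e cC that] .
      then show False using ni that unfolding idempotent_point_def by auto
    qed
    show ?thesis
    proof (rule core_min[OF e bnd dA dC covA covC nest R4 Fmin Fone _ k])
      fix p q assume "e < p" "p < q" "q \<le> 1" "\<And>x. p < x \<Longrightarrow> x \<le> q \<Longrightarrow> U x p = x"
      then show False by (rule Fid)
    qed
  next
    assume A: "in_class_Nmax U \<and> (\<forall>x. 0 < x \<and> x < e \<longrightarrow> \<not> idempotent_point U x)"
    then have N: "in_class_N U" and ni: "\<forall>x. 0 < x \<and> x < e \<longrightarrow> \<not> idempotent_point U x"
      unfolding in_class_Nmax_def by auto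
    from A obtain U1 e1 where U1: "uninorm U1 e1"
      and mx: "\<forall>x\<in>{0..1}. \<forall>y\<in>{0..1}. \<not> (x \<le> e1 \<and> y \<le> e1) \<and> \<not> (e1 \<le> x \<and> e1 \<le> y) \<longrightarrow> U1 x y = max x y"
      and eq: "\<forall>x\<in>{0<..<1}. \<forall>y\<in>{0<..<1}. U x y = U1 x y"
      unfolding in_class_Nmax_def in_class_Umax_def by blast
    have e1: "e1 = e" using neutral_unique[OF assms(1) e U1 eq] .
    have Fmax: "U x y = y" if "0 < x" "x < e" "e < y" "y < 1" for x y
    proof -
      have "U x y = U1 x y" using eq that e by auto
      also have "\<dots> = max x y" using mx that e e1 by auto
      finally show ?thesis using that by auto
    qed
    have Fzero: "U x 0 = 0" if "0 \<le> x" "x < 1" for x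
      using N that unfolding in_class_N_def by blast
    have Fid: "\<And>p q. 0 \<le> q \<Longrightarrow> q < p \<Longrightarrow> p < e \<Longrightarrow> (\<And>x. q \<le> x \<Longrightarrow> x < p \<Longrightarrow> U x p = x) \<Longrightarrow> False"
    proof -
      fix p q assume that: "0 \<le> q" "q < p" "p < e" "\<And>x. q \<le> x \<Longrightarrow> x < p \<Longrightarrow> U x p = x"
      have "U p p = p" using idem_down[OF e cT that(1,2)] that(3,4) by auto
      then show False using ni that unfolding idempotent_point_def by auto
    qed
    show ?thesis
    proof (rule core_max[OF e bnd dA dC covA covC nest R4 Fmax Fzero _ k])
      fix p q assume "0 \<le> q" "q < p" "p < e" "\<And>x. q \<le> x \<Longrightarrow> x < p \<Longrightarrow> U x p = x"
      then show False by (rule Fid)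
    qed
  qed
qed

end
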